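(* Let $n\ge 1$, $1\le m\le n$, $\eta>0$, and let $f:\mathbb{R}^n\to\mathbb{R}$ belong to $\mathcal{F}_{\sigma,L}(\mathbb{R}^n)$ for some constants $0<\sigma\le L$, with minimizer ${\bm x}^*$. Define \[ \gamma=\frac{\sigma/L}{53}\left(\frac{1-\sqrt{1-\sigma/L}}{1+\sqrt{1-\sigma/L}}\right)^2,\qquad \varepsilon=\frac{8nL^2}{\sigma}\Big(1+\frac{n}{m\gamma}\Big)\eta^2, \] and \[ T_0=\left\lceil \frac{n}{m\gamma}\log\frac{(f({\bm x}_0)-f({\bm x}^* ))(1+\frac{n}{m\gamma})}{\varepsilon}\right\rceil . \] Let ${\bm x}_0,{\bm x}_1,\dots$ be the iterates of $\mathrm{BlockCD}[n,m]$ (described in the context) started at ${\bm x}_0$ with line-search accuracy $\eta$, using the deterministic pairwise comparison oracle. Then for every $T\ge T_0$, \[ \mathbb{E}[f({\bm x}_T)-f({\bm x}^* )]\le \varepsilon, \] where the expectation is over the random choice of coordinates made by the algorithm.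
   Context: $\|\cdot\|$ is the Euclidean norm. A function $f:\mathbb{R}^n\to\mathbb{R}$ is $\sigma$-strongly convex if $f({\bm y})\ge f({\bm x})+\nabla f({\bm x})^T({\bm y}-{\bm x})+\frac{\sigma}{2}\|{\bm x}-{\bm y}\|^2$ for all ${\bm x},{\bm y}$, and $L$-strongly smooth if $\|\nabla f({\bm x})-\nabla f({\bm y})\|\le L\|{\bm x}-{\bm y}\|$ for all ${\bm x},{\bm y}$; $\mathcal{F}_{\sigma,L}(\mathbb{R}^n)$ denotes the class of functions on $\mathbb{R}^n$ that are both $\sigma$-strongly convex and $L$-strongly smooth. The deterministic pairwise comparison (PC) oracle is the map $O_f({\bm x},{\bm y})=\mathrm{sign}\{f({\bm y})-f({\bm x})\}\in\{-1,+1\}$; the algorithm accesses $f$ only through this oracle. PC-based line search: given a point ${\bm x}$, a direction ${\bm d}$ and an accuracy, it approximately minimizes $\alpha\mapsto f({\bm x}+\alpha{\bm d})$ using only oracle calls: starting from $\alpha=0$ with brackets $\alpha^\pm=\pm1$ (one of which is reset to $0$ if the oracle comparisons at ${\bm x}\pm{\bm d}$ show $f$ decreases only on one side), it doubles each bracket endpoint $\alpha^\pm$ while $O_f({\bm x},{\bm x}+\alpha^\pm{\bm d})<0$, and then repeatedly compares $f$ at the current point ${\bm x}+\alpha{\bm d}$ with $f$ at the midpoints ${\bm x}+\frac12(\alpha+\alpha^\pm){\bm d}$, moving the current point to a midpoint with smaller value (and shrinking the bracket accordingly) or otherwise shrinking both brackets toward $\alpha$, until the bracket width is at most the accuracy;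 "solving within accuracy $a$" means the returned value lies within $a$ of the exact one-dimensional minimizer. $\mathrm{BlockCD}[n,m]$: input ${\bm x}_0\in\mathbb{R}^n$ and $\eta>0$. At iteration $t=0,1,\dots$: choose $m$ coordinates $i_1,\dots,i_m$ out of $\{1,\dots,n\}$ according to the uniform distribution; (direction estimate step) for each $k=1,\dots,m$ solve $\min_{\alpha\in\mathbb{R}} f({\bm x}_t+\alpha{\bm e}_{i_k})$ within accuracy $\eta/2$ by the PC-based line search, obtaining $\alpha_{t,i_k}$ (here ${\bm e}_i$ is the $i$-th unit basis vector); set ${\bm d}_t=\sum_{k=1}^m\alpha_{t,i_k}{\bm e}_{i_k}$, and if ${\bm d}_t={\bm 0}$ add $\eta/2$ to its $i_1$-th component; (search step) solve $\min_\beta f({\bm x}_t+\beta{\bm d}_t/\|{\bm d}_t\|)$ within accuracy $\eta$ by the PC-based line search, obtaining $\beta_t$; set ${\bm x}_{t+1}={\bm x}_t+\beta_t{\bm d}_t/\|{\bm d}_t\|$. *)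

theory Defs
  imports "HOL-Analysis.Analysis" "HOL-Probability.Probability"
begin

definition strongly_convex_smooth :: "real \<Rightarrow> real \<Rightarrow> (real^'n \<Rightarrow> real) \<Rightarrow> bool" where
  "strongly_convex_smooth \<sigma> L f \<longleftrightarrow>
     (\<exists>g :: real^'n \<Rightarrow> real^'n.
        (\<forall>x. (f has_derivative (\<lambda>h. g x \<bullet> h)) (at x)) \<and>
        (\<forall>x y. f y \<ge> f x + g x \<bullet> (y - x) + \<sigma> / 2 * (norm (x - y))\<^sup>2) \<and>
        (\<forall>x y. norm (g x - g y) \<le> L * norm (x - y)))"

text \<open>Deterministic pairwise comparison oracle sign(f y - f x) with values in {-1,+1};
  ties are mapped to +1.\<close>
definition PC :: "('a \<Rightarrow> real) \<Rightarrow> 'a \<Rightarrow> 'a \<Rightarrow> int" where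
  "PC f x y = (if f y - f x < 0 then -1 else 1)"

definition ls_init :: "(real^'n \<Rightarrow> real) \<Rightarrow> real^'n \<Rightarrow> real^'n \<Rightarrow> real \<times> real" where
  "ls_init f x d =
     (if PC f x (x + d) > 0 \<and> PC f x (x - d) < 0 then (-1, 0)
      else if PC f x (x + d) < 0 \<and> PC f x (x - d) > 0 then (0, 1)
      else (-1, 1))"

definition ls_double :: "(real^'n \<Rightarrow> real) \<Rightarrow> real^'n \<Rightarrow> real^'n \<Rightarrow> real \<Rightarrow> real" where
  "ls_double f x d e =
     e * 2 ^ (LEAST k::nat. \<not> PC f x (x + (e * 2 ^ k) *\<^sub>R d) < 0)"

definition ls_step :: "(real^'n \<Rightarrow> real) \<Rightarrow> real^'n \<Rightarrow> real^'n \<Rightarrow>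
    real \<times> real \<times> real \<Rightarrow> real \<times> real \<times> real" where
  "ls_step f x d s = (case s of (a, am, ap) \<Rightarrow>
     if PC f (x + a *\<^sub>R d) (x + ((a + ap) / 2) *\<^sub>R d) < 0 then ((a + ap) / 2, a, ap)
     else if PC f (x + a *\<^sub>R d) (x + ((a + am) / 2) *\<^sub>R d) < 0 then ((a + am) / 2, am, a)
     else (a, (a + am) / 2, (a + ap) / 2))"

definition pc_line_search :: "(real^'n \<Rightarrow> real) \<Rightarrow> real^'n \<Rightarrow> real^'n \<Rightarrow> real \<Rightarrow> real" where
  "pc_line_search f x d acc =
     (let (am0, ap0) = ls_init f x d;
          s0 = (0, ls_double f x d am0, ls_double f x d ap0);
          k = (LEAST k::nat. (case (ls_step f x d ^^ k) s0 of (a, am, ap) \<Rightarrow> ap - am \<le> acc))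
      in fst ((ls_step f x d ^^ k) s0))"

definition coord_choices :: "nat \<Rightarrow> 'n list set" where
  "coord_choices m = {cs. distinct cs \<and> length cs = m}"

definition blockcd_step :: "(real^'n \<Rightarrow> real) \<Rightarrow> real \<Rightarrow> real^'n \<Rightarrow> 'n list \<Rightarrow> real^'n" where
  "blockcd_step f \<eta> x cs =
     (let d0 = (\<Sum>i\<in>set cs. pc_line_search f x (axis i 1) (\<eta> / 2) *\<^sub>R axis i 1);
          d = (if d0 = 0 then d0 + (\<eta> / 2) *\<^sub>R axis (hd cs) 1 else d0);
          u = (1 / norm d) *\<^sub>R d;
          \<beta> = pc_line_search f x u \<eta>
      in x + \<beta> *\<^sub>R u)"

primrec blockcd_dist :: "(real^'n \<Rightarrow> real) \<Rightarrow> real \<Rightarrow> nat \<Rightarrow> real^'n \<Rightarrow> nat \<Rightarrow> (real^'n) pmf" where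
  "blockcd_dist f \<eta> m x0 0 = return_pmf x0"
| "blockcd_dist f \<eta> m x0 (Suc t) =
     bind_pmf (blockcd_dist f \<eta> m x0 t)
       (\<lambda>x. map_pmf (blockcd_step f \<eta> x) (pmf_of_set (coord_choices m)))"

end

theory Submission imports Defs begin

definition sw :: "'a \<Rightarrow> 'a \<Rightarrow> 'a \<Rightarrow> 'a" where
  "sw i j k = (if k = i then j else if k = j then i else k)"

lemma sw_sw: "sw i j (sw i j k) = k" by (simp add: sw_def)
lemma sw_comp: "sw i j \<circ> sw i j = id" by (rule ext) (simp add: sw_sw)
lemma sw_inj: "inj (sw i j)" by (metis injI sw_sw)

lemma coord_choices_finite: "finite (coord_choices m :: ('n::finite) list set)"
proof -
  have "coord_choices m \<subseteq> {xs :: 'n list. set xs \<subseteq> UNIV \<and> length xs = m}"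
    unfolding coord_choices_def by auto
  moreover have "finite {xs :: 'n list. set xs \<subseteq> UNIV \<and> length xs = m}"
    by (rule finite_lists_length_eq) simp
  ultimately show ?thesis by (rule finite_subset)
qed

lemma coord_choices_ne:
  assumes "m \<le> CARD('n::finite)"
  shows "coord_choices m \<noteq> ({} :: 'n list set)"
proof -
  obtain xs :: "'n list" where xs: "set xs = UNIV" "distinct xs"
    using finite_distinct_list[of "UNIV :: 'n set"] by auto
  have "length xs = CARD('n)" using xs distinct_card by fastforce
  then have "take m xs \<in> coord_choices m" using xs assms unfolding coord_choices_def by simp
  then show ?thesis by blast
qed

lemma count_sym:
  fixes i j :: "'n::finite"
  shows "card {cs \<in> coord_choices m. i \<in> set cs} = card {cs \<in> coord_choices m. j \<in> set cs}"
proof -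
  let ?h = "map (sw i j)"
  have mem: "?h cs \<in> coord_choices m" if "cs \<in> coord_choices m" for cs
    using that sw_inj[of i j] unfolding coord_choices_def by (auto simp: distinct_map inj_on_def)
  have hh: "?h (?h cs) = cs" for cs by (simp add: sw_sw comp_def)
  have "bij_betw ?h {cs \<in> coord_choices m. i \<in> set cs} {cs \<in> coord_choices m. j \<in> set cs}"
  proof (rule bij_betwI[where g="?h"])
    show "?h \<in> {cs \<in> coord_choices m. i \<in> set cs} \<rightarrow> {cs \<in> coord_choices m. j \<in> set cs}"
      using mem by (auto simp: sw_def image_iff intro: bexI[where x=i])
    show "?h \<in> {cs \<in> coord_choices m. j \<in> set cs} \<rightarrow> {cs \<in> coord_choices m. i \<in> set cs}"
      using mem by (auto simp: sw_def image_iff split: if_splits intro: bexI[where x=j])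
  qed (simp_all add: sw_comp)
  then show ?thesis by (rule bij_betw_same_card)
qed

lemma avg_sum:
  fixes h :: "'n::finite \<Rightarrow> real"
  assumes m: "m \<le> CARD('n)"
  shows "(\<Sum>cs\<in>coord_choices m. \<Sum>i\<in>set cs. h i)
         = real (card (coord_choices m :: 'n list set)) * real m / real CARD('n) * (\<Sum>i\<in>UNIV. h i)"
proof -
  let ?C = "coord_choices m :: 'n list set"
  have fC: "finite ?C" by (rule coord_choices_finite)
  obtain i0 :: 'n where True by blast
  define c where "c = card {cs \<in> ?C. i0 \<in> set cs}"
  have cnt: "card {cs \<in> ?C. i \<in> set cs} = c" for i unfolding c_def by (rule count_sym)
  have swap: "(\<Sum>cs\<in>?C. \<Sum>i\<in>set cs. h i) = (\<Sum>i\<in>UNIV. h i * real (card {cs \<in> ?C. i \<in> set cs}))"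
    for h :: "'n \<Rightarrow> real"
  proof -
    have "(\<Sum>cs\<in>?C. \<Sum>i\<in>set cs. h i) = (\<Sum>cs\<in>?C. \<Sum>i\<in>UNIV. if i \<in> set cs then h i else 0)"
      by (rule sum.cong) (simp_all add: sum.If_cases Int_absorb1)
    also have "\<dots> = (\<Sum>i\<in>UNIV. \<Sum>cs\<in>?C. if i \<in> set cs then h i else 0)" by (rule sum.swap)
    also have "\<dots> = (\<Sum>i\<in>UNIV. h i * real (card {cs \<in> ?C. i \<in> set cs}))"
      by (rule sum.cong) (simp_all add: sum.If_cases fC Int_def mult.commute)
    finally show ?thesis .
  qed
  have tot: "real CARD('n) * real c = real (card ?C) * real m"
  proof -
    have "(\<Sum>cs\<in>?C. \<Sum>i\<in>set cs. (1::real)) = real CARD('n) * real c"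
      using swap[of "\<lambda>_. 1"] by (simp add: cnt)
    moreover have "(\<Sum>cs\<in>?C. \<Sum>i\<in>set cs. (1::real)) = real (card ?C) * real m"
      by (simp add: coord_choices_def distinct_card)
    ultimately show ?thesis by simp
  qed
  have "(\<Sum>cs\<in>?C. \<Sum>i\<in>set cs. h i) = real c * (\<Sum>i\<in>UNIV. h i)"
    unfolding swap cnt by (simp add: sum_distrib_left mult.commute)
  also have "real c = real (card ?C) * real m / real CARD('n)" using tot by (simp add: field_simps)
  finally show ?thesis .
qed

lemma sq_le: "\<bar>a::real\<bar> \<le> b \<Longrightarrow> a\<^sup>2 \<le> b\<^sup>2"
  by (metis abs_ge_zero power2_abs power_mono)

lemma comp_sum: "finite S \<Longrightarrow> (\<Sum>i\<in>S. c i *\<^sub>R axis i (1::real) :: real^'n) $ j = (if j \<in> S then c j else 0)"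
proof -
  assume "finite S"
  have e: "(\<lambda>x. c x * (if j = x then 1 else 0)) = (\<lambda>x. if j = x then c x else (0::real))" by auto
  have "(\<Sum>i\<in>S. c i *\<^sub>R axis i (1::real) :: real^'n) $ j = (\<Sum>i\<in>S. (c i *\<^sub>R axis i (1::real) :: real^'n) $ j)"
    by (rule sum_component)
  also have "\<dots> = (\<Sum>i\<in>S. if j = i then c i else 0)"
    by (rule sum.cong) (auto simp: axis_def)
  also have "\<dots> = (if j \<in> S then c j else 0)" using \<open>finite S\<close> by (simp add: sum.delta)
  finally show ?thesis .
qed
lemma inner_sum: "finite S \<Longrightarrow> (y::real^'n) \<bullet> (\<Sum>i\<in>S. c i *\<^sub>R axis i (1::real)) = (\<Sum>i\<in>S. y $ i * c i)"
  by (simp add: inner_sum_right inner_axis mult.commute)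
lemma norm_sum: "finite S \<Longrightarrow> (norm (\<Sum>i\<in>S. c i *\<^sub>R axis i (1::real) :: real^'n))\<^sup>2 = (\<Sum>i\<in>S. (c i)\<^sup>2)"
proof -
  assume fs: "finite S"
  let ?v = "(\<Sum>i\<in>S. c i *\<^sub>R axis i (1::real) :: real^'n)"
  have "(norm ?v)\<^sup>2 = ?v \<bullet> ?v" by (simp add: power2_norm_eq_inner)
  also have "\<dots> = (\<Sum>i\<in>S. ?v $ i * c i)" using inner_sum[OF fs] .
  also have "\<dots> = (\<Sum>i\<in>S. (c i)\<^sup>2)" using comp_sum[OF fs] by (simp add: power2_eq_square)
  finally show ?thesis .
qed

locale scs =
  fixes f :: "real^'n \<Rightarrow> real" and g :: "real^'n \<Rightarrow> real^'n" and \<sigma> L :: real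
  assumes sc: "\<And>x y. f y \<ge> f x + g x \<bullet> (y - x) + \<sigma> / 2 * (norm (x - y))\<^sup>2"
  and lip: "\<And>x y. norm (g x - g y) \<le> L * norm (x - y)"
  and sp: "0 < \<sigma>" and sL: "\<sigma> \<le> L"
begin

lemma Lpos: "0 < L" using sp sL by linarith

lemma ub: "f y \<le> f x + g x \<bullet> (y - x) + L * (norm (y - x))\<^sup>2"
proof -
  have "f x \<ge> f y + g y \<bullet> (x - y) + \<sigma> / 2 * (norm (y - x))\<^sup>2" using sc[of y x] .
  moreover have "\<sigma> / 2 * (norm (y - x))\<^sup>2 \<ge> 0" using sp by simp
  ultimately have 1: "f y \<le> f x + g y \<bullet> (y - x)"
    by (simp add: inner_diff_right)
  have "g y \<bullet> (y - x) = g x \<bullet> (y - x) + (g y - g x) \<bullet> (y - x)" by (simp add: inner_diff_left)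
  also have "(g y - g x) \<bullet> (y - x) \<le> norm (g y - g x) * norm (y - x)" by (rule norm_cauchy_schwarz)
  also have "\<dots> \<le> L * norm (y - x) * norm (y - x)"
    using lip[of y x] by (simp add: mult_right_mono)
  finally show ?thesis using 1 by (simp add: power2_eq_square)
qed

lemma mono: "(g y - g x) \<bullet> (y - x) \<ge> \<sigma> * (norm (y - x))\<^sup>2"
proof -
  have a: "f y \<ge> f x + g x \<bullet> (y - x) + \<sigma> / 2 * (norm (x - y))\<^sup>2" using sc .
  have b: "f x \<ge> f y + g y \<bullet> (x - y) + \<sigma> / 2 * (norm (y - x))\<^sup>2" using sc .
  have "norm (x - y) = norm (y - x)" by (rule norm_minus_commute)
  with a b show ?thesis by (simp add: inner_diff_left inner_diff_right inner_commute algebra_simps)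
qed

lemma strict_min:
  assumes d: "d \<noteq> 0" and t: "g (x + t *\<^sub>R d) \<bullet> d = 0" and st: "s \<noteq> t"
  shows "f (x + t *\<^sub>R d) < f (x + s *\<^sub>R d)"
proof -
  have "f (x + s *\<^sub>R d) \<ge> f (x + t *\<^sub>R d) + g (x + t *\<^sub>R d) \<bullet> ((x + s *\<^sub>R d) - (x + t *\<^sub>R d))
        + \<sigma> / 2 * (norm ((x + t *\<^sub>R d) - (x + s *\<^sub>R d)))\<^sup>2" using sc .
  moreover have "(x + s *\<^sub>R d) - (x + t *\<^sub>R d) = (s - t) *\<^sub>R d" by (simp add: algebra_simps)
  moreover have "(x + t *\<^sub>R d) - (x + s *\<^sub>R d) = (t - s) *\<^sub>R d" by (simp add: algebra_simps)
  moreover have "\<sigma> / 2 * (norm ((t - s) *\<^sub>R d))\<^sup>2 > 0" using d st sp by simp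
  ultimately show ?thesis using t by (simp only: inner_scaleR_right)
qed

lemma unimodal:
  assumes d: "d \<noteq> 0" and abc: "a < b" "b < c"
  shows "f (x + b *\<^sub>R d) < max (f (x + a *\<^sub>R d)) (f (x + c *\<^sub>R d))"
proof -
  define q where "q = g (x + b *\<^sub>R d) \<bullet> d"
  have A: "f (x + a *\<^sub>R d) \<ge> f (x + b *\<^sub>R d) + g (x + b *\<^sub>R d) \<bullet> ((x + a *\<^sub>R d) - (x + b *\<^sub>R d))
        + \<sigma> / 2 * (norm ((x + b *\<^sub>R d) - (x + a *\<^sub>R d)))\<^sup>2" using sc .
  have C: "f (x + c *\<^sub>R d) \<ge> f (x + b *\<^sub>R d) + g (x + b *\<^sub>R d) \<bullet> ((x + c *\<^sub>R d) - (x + b *\<^sub>R d))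
        + \<sigma> / 2 * (norm ((x + b *\<^sub>R d) - (x + c *\<^sub>R d)))\<^sup>2" using sc .
  have e1: "(x + a *\<^sub>R d) - (x + b *\<^sub>R d) = (a - b) *\<^sub>R d" "(x + c *\<^sub>R d) - (x + b *\<^sub>R d) = (c - b) *\<^sub>R d"
    "(x + b *\<^sub>R d) - (x + a *\<^sub>R d) = (b - a) *\<^sub>R d" "(x + b *\<^sub>R d) - (x + c *\<^sub>R d) = (b - c) *\<^sub>R d"
    by (simp_all add: algebra_simps)
  have p1: "\<sigma> / 2 * (norm ((b - a) *\<^sub>R d))\<^sup>2 > 0" using d abc sp by simp
  have p2: "\<sigma> / 2 * (norm ((b - c) *\<^sub>R d))\<^sup>2 > 0" using d abc sp by simp
  have A': "f (x + a *\<^sub>R d) > f (x + b *\<^sub>R d) + q * (a - b)"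
  proof -
    have "f (x + a *\<^sub>R d) \<ge> f (x + b *\<^sub>R d) + q * (a - b) + \<sigma> / 2 * (norm ((b - a) *\<^sub>R d))\<^sup>2"
      using A unfolding e1 q_def by (simp only: inner_scaleR_right mult.commute)
    then show ?thesis using p1 by linarith
  qed
  have C': "f (x + c *\<^sub>R d) > f (x + b *\<^sub>R d) + q * (c - b)"
  proof -
    have "f (x + c *\<^sub>R d) \<ge> f (x + b *\<^sub>R d) + q * (c - b) + \<sigma> / 2 * (norm ((b - c) *\<^sub>R d))\<^sup>2"
      using C unfolding e1 q_def by (simp only: inner_scaleR_right mult.commute)
    then show ?thesis using p2 by linarith
  qed
  show ?thesis
  proof (cases "q \<ge> 0")
    case True
    then have "q * (c - b) \<ge> 0" using abc by simp
    then show ?thesis using C' by linarith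
  next
    case False
    then have "q * (a - b) \<ge> 0" using abc by (simp add: mult_nonpos_nonpos)
    then show ?thesis using A' by linarith
  qed
qed

lemma dec:
  assumes d: "d \<noteq> 0" and t: "g (x + t *\<^sub>R d) \<bullet> d = 0" and sr: "s < r" "r \<le> t"
  shows "f (x + r *\<^sub>R d) < f (x + s *\<^sub>R d)"
proof (cases "r = t")
  case True
  then show ?thesis using strict_min[OF d t, of s] sr by simp
next
  case False
  then have "r < t" using sr by simp
  from unimodal[OF d sr(1) this, where x=x] strict_min[OF d t, of r] False show ?thesis by linarith
qed

lemma inc:
  assumes d: "d \<noteq> 0" and t: "g (x + t *\<^sub>R d) \<bullet> d = 0" and sr: "t \<le> r" "r < s"
  shows "f (x + r *\<^sub>R d) < f (x + s *\<^sub>R d)"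
proof (cases "r = t")
  case True
  then show ?thesis using strict_min[OF d t, of s] sr by simp
next
  case False
  then have "t < r" using sr by simp
  from unimodal[OF d this sr(2), where x=x] strict_min[OF d t, of r] False show ?thesis by linarith
qed

lemma exists_root:
  assumes d: "d \<noteq> 0"
  shows "\<exists>t. g (x + t *\<^sub>R d) \<bullet> d = 0"
proof -
  define p where "p t = g (x + t *\<^sub>R d) \<bullet> d" for t
  have nd: "(norm d)\<^sup>2 > 0" using d by simp
  have key: "t * (p t - p 0) \<ge> \<sigma> * t\<^sup>2 * (norm d)\<^sup>2" for t
  proof -
    have "(g (x + t *\<^sub>R d) - g x) \<bullet> ((x + t *\<^sub>R d) - x) \<ge> \<sigma> * (norm ((x + t *\<^sub>R d) - x))\<^sup>2"
      using mono .
    then show ?thesis by (simp add: p_def inner_diff_left inner_scaleR_right power_mult_distrib algebra_simps)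
  qed
  define T where "T = \<bar>p 0\<bar> / (\<sigma> * (norm d)\<^sup>2) + 1"
  have Tpos: "T > 0" proof -
    have "\<bar>p 0\<bar> / (\<sigma> * (norm d)\<^sup>2) \<ge> 0" using sp nd by simp
    then show ?thesis unfolding T_def by linarith
  qed
  have sT: "\<sigma> * T * (norm d)\<^sup>2 \<ge> \<bar>p 0\<bar>"
  proof -
    have "\<sigma> * T * (norm d)\<^sup>2 = \<bar>p 0\<bar> + \<sigma> * (norm d)\<^sup>2" unfolding T_def using sp nd
      by (simp add: field_simps)
    then show ?thesis using sp nd by simp
  qed
  have pT: "p T \<ge> 0"
  proof -
    have "T * (p T - p 0) \<ge> T * (\<sigma> * T * (norm d)\<^sup>2)" using key[of T] by (simp add: power2_eq_square algebra_simps)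
    then have "p T - p 0 \<ge> \<sigma> * T * (norm d)\<^sup>2" using Tpos by simp
    then show ?thesis using sT by linarith
  qed
  have pmT: "p (-T) \<le> 0"
  proof -
    have "(-T) * (p (-T) - p 0) \<ge> (-T) * (- (\<sigma> * T * (norm d)\<^sup>2))" using key[of "-T"] by (simp add: power2_eq_square algebra_simps)
    then have "T * (p (-T) - p 0) \<le> T * (- (\<sigma> * T * (norm d)\<^sup>2))" by (simp add: algebra_simps)
    then have "p (-T) - p 0 \<le> - (\<sigma> * T * (norm d)\<^sup>2)" using Tpos
      by (simp only: mult_le_cancel_left_pos)
    then show ?thesis using sT by linarith
  qed
  have gl: "L-lipschitz_on UNIV g"
    by (rule lipschitz_onI) (use lip Lpos in \<open>auto simp: dist_norm\<close>)
  have "continuous_on UNIV g" by (rule lipschitz_on_continuous_on[OF gl])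
  then have cg: "continuous_on ((\<lambda>t::real. x + t *\<^sub>R d) ` UNIV) g" by (rule continuous_on_subset) simp
  have c1: "continuous_on UNIV (\<lambda>t::real. x + t *\<^sub>R d)" by (intro continuous_intros)
  have c2: "continuous_on UNIV (\<lambda>t::real. g (x + t *\<^sub>R d))"
    using continuous_on_compose[OF c1 cg] by (simp add: o_def)
  have c3: "continuous_on UNIV p" unfolding p_def by (intro continuous_on_inner c2 continuous_on_const)
  then have "continuous_on {-T..T} p" by (rule continuous_on_subset) simp
  from IVT'[of p "-T" 0 T, OF pmT pT _ this] Tpos obtain t where "p t = 0" by auto
  then show ?thesis unfolding p_def by blast
qed

lemma double_ex:
  assumes d: "d \<noteq> 0" and e: "e = 1 \<or> e = -1"
  shows "\<exists>k::nat. \<not> f (x + (e * 2 ^ k) *\<^sub>R d) < f x"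
proof -
  define p0 where "p0 = g x \<bullet> d"
  have nd: "(norm d)\<^sup>2 > 0" using d by simp
  obtain k :: nat where k: "2 * \<bar>p0\<bar> / (\<sigma> * (norm d)\<^sup>2) < 2 ^ k"
    using real_arch_pow[of 2 "2 * \<bar>p0\<bar> / (\<sigma> * (norm d)\<^sup>2)"] by auto
  define s where "s = e * 2 ^ k"
  have s2: "s\<^sup>2 = (2 ^ k)\<^sup>2" using e unfolding s_def by (auto simp: power2_eq_square)
  have sp0: "s * p0 \<ge> - (2 ^ k * \<bar>p0\<bar>)" using e unfolding s_def by (auto simp: abs_if)
  have "f (x + s *\<^sub>R d) \<ge> f x + g x \<bullet> ((x + s *\<^sub>R d) - x) + \<sigma> / 2 * (norm (x - (x + s *\<^sub>R d)))\<^sup>2"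
    using sc .
  then have A: "f (x + s *\<^sub>R d) \<ge> f x + s * p0 + \<sigma> / 2 * s\<^sup>2 * (norm d)\<^sup>2"
    by (simp add: p0_def inner_scaleR_right power_mult_distrib)
  have "2 * \<bar>p0\<bar> < 2 ^ k * (\<sigma> * (norm d)\<^sup>2)" using k sp nd by (simp add: divide_less_eq)
  then have "2 ^ k * (2 * \<bar>p0\<bar>) \<le> 2 ^ k * (2 ^ k * (\<sigma> * (norm d)\<^sup>2))"
    by (intro mult_left_mono) auto
  then have "\<sigma> / 2 * s\<^sup>2 * (norm d)\<^sup>2 \<ge> 2 ^ k * \<bar>p0\<bar>" unfolding s2 by (simp add: power2_eq_square algebra_simps)
  then have "\<not> f (x + s *\<^sub>R d) < f x" using A sp0 by linarith
  then show ?thesis unfolding s_def by blast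
qed

definition Inv :: "real \<Rightarrow> real \<times> real \<times> real \<Rightarrow> bool" where
  "Inv t s = (case s of (a, am, ap) \<Rightarrow> am \<le> a \<and> a \<le> ap \<and> am \<le> t \<and> t \<le> ap)"

definition Dp :: "real \<times> real \<times> real \<Rightarrow> real" where
  "Dp s = (case s of (a, am, ap) \<Rightarrow> max (a - am) (ap - a))"

lemma step_inv:
  assumes d: "d \<noteq> 0" and t: "g (x + t *\<^sub>R d) \<bullet> d = 0" and I: "Inv t s"
  shows "Inv t (ls_step f x d s) \<and> Dp (ls_step f x d s) \<le> Dp s / 2"
proof -
  obtain a am ap where s: "s = (a, am, ap)" by (cases s) auto
  have I': "am \<le> a" "a \<le> ap" "am \<le> t" "t \<le> ap" using I unfolding s Inv_def by auto
  define mp where "mp = (a + ap) / 2"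
  define mm where "mm = (a + am) / 2"
  show ?thesis
  proof (cases "f (x + mp *\<^sub>R d) < f (x + a *\<^sub>R d)")
    case True
    then have "a \<noteq> mp" by auto
    then have amp: "a < mp" using I' unfolding mp_def by simp
    have "a < t"
    proof (rule ccontr)
      assume "\<not> a < t"
      then have "f (x + a *\<^sub>R d) < f (x + mp *\<^sub>R d)" using inc[OF d t, of a mp] amp by simp
      then show False using True by simp
    qed
    moreover have "ls_step f x d s = (mp, a, ap)"
      using True unfolding s ls_step_def PC_def mp_def by simp
    moreover have "Dp (mp, a, ap) = (ap - a) / 2" unfolding Dp_def mp_def by (simp add: field_simps)
    moreover have "ap - a \<le> Dp s" unfolding Dp_def s by simp
    moreover have "a \<le> mp" "mp \<le> ap" using I' unfolding mp_def by simp_all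
    ultimately show ?thesis using I' unfolding Inv_def by simp
  next
    case F1: False
    show ?thesis
    proof (cases "f (x + mm *\<^sub>R d) < f (x + a *\<^sub>R d)")
      case True
      then have "a \<noteq> mm" by auto
      then have amm: "mm < a" using I' unfolding mm_def by simp
      have "t < a"
      proof (rule ccontr)
        assume "\<not> t < a"
        then have "f (x + a *\<^sub>R d) < f (x + mm *\<^sub>R d)" using dec[OF d t, of mm a] amm by simp
        then show False using True by simp
      qed
      moreover have "ls_step f x d s = (mm, am, a)"
        using True F1 unfolding s ls_step_def PC_def mp_def mm_def by simp
      moreover have "Dp (mm, am, a) = (a - am) / 2" unfolding Dp_def mm_def by (simp add: field_simps)
      moreover have "a - am \<le> Dp s" unfolding Dp_def s by simp
      moreover have "am \<le> mm" "mm \<le> a" using I' unfolding mm_def by simp_all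
      ultimately show ?thesis using I' unfolding Inv_def by simp
    next
      case F2: False
      have "t \<le> mp"
      proof (cases "a < mp")
        case True
        show ?thesis
        proof (rule ccontr)
          assume "\<not> t \<le> mp"
          then have "f (x + mp *\<^sub>R d) < f (x + a *\<^sub>R d)" using dec[OF d t, of a mp] True by simp
          then show False using F1 by simp
        qed
      next
        case False
        then show ?thesis using I' unfolding mp_def by simp
      qed
      moreover have "mm \<le> t"
      proof (cases "mm < a")
        case True
        show ?thesis
        proof (rule ccontr)
          assume "\<not> mm \<le> t"
          then have "f (x + mm *\<^sub>R d) < f (x + a *\<^sub>R d)" using inc[OF d t, of mm a] True by simp
          then show False using F2 by simp
        qed
      next
        case False
        then show ?thesis using I' unfolding mm_def by simp
      qed
      moreover have "ls_step f x d s = (a, mm, mp)"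
        using F1 F2 unfolding s ls_step_def PC_def mp_def mm_def by simp
      moreover have "Dp (a, mm, mp) = Dp s / 2" unfolding Dp_def mm_def mp_def s
        by (simp add: max_def field_simps)
      moreover have "mm \<le> a" "a \<le> mp" using I' unfolding mm_def mp_def by simp_all
      ultimately show ?thesis using I' unfolding Inv_def by simp
    qed
  qed
qed

lemma PC_neg: "PC f x y < 0 \<longleftrightarrow> f y < f x" by (simp add: PC_def)

lemma double_prop:
  assumes d: "d \<noteq> 0" and e: "e = 1 \<or> e = -1"
  shows "\<not> f (x + ls_double f x d e *\<^sub>R d) < f x \<and> (\<exists>k::nat. ls_double f x d e = e * 2 ^ k)"
  using LeastI_ex[OF double_ex[OF d e, of x]] unfolding ls_double_def PC_neg by blast

lemma iter_inv:
  assumes d: "d \<noteq> 0" and t: "g (x + t *\<^sub>R d) \<bullet> d = 0" and I: "Inv t s0"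
  shows "Inv t ((ls_step f x d ^^ k) s0) \<and> Dp ((ls_step f x d ^^ k) s0) \<le> Dp s0 / 2 ^ k"
proof (induction k)
  case 0
  then show ?case using I by simp
next
  case (Suc k)
  then have "Inv t (ls_step f x d ((ls_step f x d ^^ k) s0)) \<and>
     Dp (ls_step f x d ((ls_step f x d ^^ k) s0)) \<le> Dp ((ls_step f x d ^^ k) s0) / 2"
    using step_inv[OF d t] by blast
  moreover have "Dp s0 / 2 ^ (Suc k) = (Dp s0 / 2 ^ k) / 2" by simp
  ultimately show ?case using Suc by auto
qed

lemma ls_correct:
  assumes d: "d \<noteq> 0" and t: "g (x + t *\<^sub>R d) \<bullet> d = 0" and acc: "acc > 0"
  shows "\<bar>pc_line_search f x d acc - t\<bar> \<le> acc"
proof -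
  obtain am0 ap0 where init: "ls_init f x d = (am0, ap0)" by (cases "ls_init f x d") auto
  have xm: "x - d = x + (-1) *\<^sub>R d" by simp
  have x0: "x = x + 0 *\<^sub>R d" by simp
  have x1: "x + d = x + 1 *\<^sub>R d" by simp
  have ini: "(am0 = -1 \<or> am0 = 0) \<and> (ap0 = 1 \<or> ap0 = 0) \<and> (am0 = 0 \<longrightarrow> 0 \<le> t) \<and> (ap0 = 0 \<longrightarrow> t \<le> 0)"
  proof (cases "\<not> f (x + d) < f x \<and> f (x - d) < f x")
    case True
    then have "am0 = -1" "ap0 = 0" using init unfolding ls_init_def PC_def by auto
    moreover have "t \<le> 0"
    proof (rule ccontr)
      assume "\<not> t \<le> 0"
      then have "f (x + 0 *\<^sub>R d) < f (x + (-1) *\<^sub>R d)" using dec[OF d t, of "-1" 0] by simp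
      then show False using True by simp
    qed
    ultimately show ?thesis by simp
  next
    case F: False
    show ?thesis
    proof (cases "f (x + d) < f x \<and> \<not> f (x - d) < f x")
      case True
      then have "am0 = 0" "ap0 = 1" using init F unfolding ls_init_def PC_def by auto
      moreover have "0 \<le> t"
      proof (rule ccontr)
        assume "\<not> 0 \<le> t"
        then have "f (x + 0 *\<^sub>R d) < f (x + 1 *\<^sub>R d)" using inc[OF d t, of 0 1] by simp
        then show False using True by simp
      qed
      ultimately show ?thesis by simp
    next
      case False
      then have "am0 = -1" "ap0 = 1" using init F unfolding ls_init_def PC_def by auto
      then show ?thesis by simp
    qed
  qed
  define am where "am = ls_double f x d am0"
  define ap where "ap = ls_double f x d ap0"
  have amp: "am \<le> 0 \<and> am \<le> t"
  proof (cases "am0 = 0")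
    case True
    then show ?thesis using ini unfolding am_def ls_double_def by simp
  next
    case False
    then have e: "am0 = -1" using ini by simp
    from double_prop[OF d, of am0 x] e obtain k :: nat where
      k: "\<not> f (x + am *\<^sub>R d) < f x" "am = - (2 ^ k)" unfolding am_def by auto
    have neg: "am < 0" using k(2) by simp
    have "am < t"
    proof (rule ccontr)
      assume "\<not> am < t"
      then have "f (x + am *\<^sub>R d) < f (x + 0 *\<^sub>R d)" using inc[OF d t, of am 0] neg by simp
      then show False using k(1) by simp
    qed
    then show ?thesis using neg by simp
  qed
  have app: "0 \<le> ap \<and> t \<le> ap"
  proof (cases "ap0 = 0")
    case True
    then show ?thesis using ini unfolding ap_def ls_double_def by simp
  next
    case False
    then have e: "ap0 = 1" using ini by simp
    from double_prop[OF d, of ap0 x] e obtain k :: nat where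
      k: "\<not> f (x + ap *\<^sub>R d) < f x" "ap = 2 ^ k" unfolding ap_def by auto
    have pos: "0 < ap" using k(2) by simp
    have "t < ap"
    proof (rule ccontr)
      assume "\<not> t < ap"
      then have "f (x + ap *\<^sub>R d) < f (x + 0 *\<^sub>R d)" using dec[OF d t, of 0 ap] pos by simp
      then show False using k(1) by simp
    qed
    then show ?thesis using pos by simp
  qed
  define s0 where "s0 = (0::real, am, ap)"
  have I0: "Inv t s0" unfolding s0_def Inv_def using amp app by simp
  define st where "st k = (ls_step f x d ^^ k) s0" for k
  have IK: "Inv t (st k) \<and> Dp (st k) \<le> Dp s0 / 2 ^ k" for k
    unfolding st_def using iter_inv[OF d t I0] .
  have wid: "Inv t s \<Longrightarrow> (case s of (a, am, ap) \<Rightarrow> ap - am) \<le> 2 * Dp s" for s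
    by (cases s) (auto simp: Inv_def Dp_def max_def)
  have Dnn: "Dp s0 \<ge> 0" unfolding Dp_def s0_def using amp app by (simp add: le_max_iff_disj)
  obtain k :: nat where k: "2 * Dp s0 / acc < 2 ^ k" using real_arch_pow[of 2 "2 * Dp s0 / acc"] by auto
  have "2 * Dp s0 < 2 ^ k * acc" using k acc by (simp add: divide_less_eq)
  then have "2 * (Dp s0 / 2 ^ k) \<le> acc" by (simp add: field_simps)
  then have ex: "(case st k of (a, am, ap) \<Rightarrow> ap - am \<le> acc)"
    using wid[OF IK[THEN conjunct1, of k]] IK[of k] by (cases "st k") auto
  define k0 where "k0 = (LEAST k. (case st k of (a, am, ap) \<Rightarrow> ap - am \<le> acc))"
  have c0: "(case st k0 of (a, am, ap) \<Rightarrow> ap - am \<le> acc)" unfolding k0_def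
    by (rule LeastI[of _ k]) (rule ex)
  have res: "pc_line_search f x d acc = fst (st k0)"
    unfolding pc_line_search_def init k0_def st_def s0_def am_def ap_def by (simp add: Let_def)
  obtain a1 am1 ap1 where sk: "st k0 = (a1, am1, ap1)" by (cases "st k0") auto
  show ?thesis using c0 IK[of k0] unfolding res sk by (auto simp: Inv_def)
qed

lemma coord_facts:
  assumes t: "g (x + t *\<^sub>R axis i 1) \<bullet> axis i 1 = 0"
  shows "g x $ i * t \<le> - (g x $ i)\<^sup>2 / L" and "t\<^sup>2 \<le> (g x $ i)\<^sup>2 / \<sigma>\<^sup>2"
proof -
  define gi where "gi = g x $ i"
  have t': "g (x + t *\<^sub>R axis i 1) $ i = 0" using t by (simp add: inner_axis)
  have "(g (x + t *\<^sub>R axis i 1) - g x) \<bullet> ((x + t *\<^sub>R axis i 1) - x) \<ge> \<sigma> * (norm ((x + t *\<^sub>R axis i 1) - x))\<^sup>2"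
    using mono .
  then have h1: "- gi * t \<ge> \<sigma> * t\<^sup>2"
    using t' by (simp add: gi_def inner_diff_left inner_axis power_mult_distrib mult.commute)
  have "norm (g (x + t *\<^sub>R axis i 1) - g x) \<le> L * norm ((x + t *\<^sub>R axis i 1) - x)" using lip .
  moreover have "\<bar>(g (x + t *\<^sub>R axis i 1) - g x) $ i\<bar> \<le> norm (g (x + t *\<^sub>R axis i 1) - g x)"
    by (rule component_le_norm_cart)
  ultimately have h2: "\<bar>gi\<bar> \<le> L * \<bar>t\<bar>" using t' by (simp add: gi_def)
  have nn: "- gi * t \<ge> 0" using h1 sp by (metis mult_nonneg_nonneg less_imp_le zero_le_power2 order_trans)
  have eq: "- gi * t = \<bar>gi\<bar> * \<bar>t\<bar>" using nn by (simp add: abs_mult[symmetric])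
  have "gi\<^sup>2 \<le> L * (\<bar>gi\<bar> * \<bar>t\<bar>)"
  proof -
    have "\<bar>gi\<bar> * \<bar>gi\<bar> \<le> \<bar>gi\<bar> * (L * \<bar>t\<bar>)" using h2 by (intro mult_left_mono) auto
    then show ?thesis by (simp add: power2_eq_square abs_mult_self algebra_simps)
  qed
  then have "gi\<^sup>2 \<le> L * (- gi * t)" using eq by simp
  then show "g x $ i * t \<le> - (g x $ i)\<^sup>2 / L" using Lpos unfolding gi_def[symmetric]
    by (simp add: field_simps)
  show "t\<^sup>2 \<le> (g x $ i)\<^sup>2 / \<sigma>\<^sup>2"
  proof (cases "t = 0")
    case True then show ?thesis by simp
  next
    case False
    have "\<sigma> * \<bar>t\<bar> * \<bar>t\<bar> \<le> \<bar>gi\<bar> * \<bar>t\<bar>" using h1 eq by (simp add: power2_eq_square abs_mult_self)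
    then have "\<sigma> * \<bar>t\<bar> \<le> \<bar>gi\<bar>" using False by simp
    then have "(\<sigma> * \<bar>t\<bar>)\<^sup>2 \<le> \<bar>gi\<bar>\<^sup>2" using sp by (intro power_mono) auto
    then have "\<sigma>\<^sup>2 * t\<^sup>2 \<le> gi\<^sup>2" by (simp add: power_mult_distrib)
    then show ?thesis unfolding gi_def[symmetric] using sp by (simp add: field_simps)
  qed
qed

lemma step_decrease:
  assumes cs: "cs \<in> coord_choices m" and m1: "1 \<le> m" and eta: "\<eta> > 0"
  shows "f (blockcd_step f \<eta> x cs) \<le> f x - \<sigma>\<^sup>2 / (48 * L ^ 3) * (\<Sum>i\<in>set cs. (g x $ i)\<^sup>2)
           + (L + real m * L / 48) * \<eta>\<^sup>2"
proof -
  define S where "S = set cs"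
  have fS: "finite S" unfolding S_def by simp
  have cardS: "card S = m" using cs unfolding S_def coord_choices_def by (simp add: distinct_card)
  have csne: "cs \<noteq> []" using cs m1 unfolding coord_choices_def by auto
  have axnz: "axis i (1::real) \<noteq> (0 :: real^'n)" for i by (simp add: axis_eq_0_iff)
  define ts where "ts i = (SOME t. g (x + t *\<^sub>R axis i 1) \<bullet> axis i 1 = 0)" for i
  have tsr: "g (x + ts i *\<^sub>R axis i 1) \<bullet> axis i 1 = 0" for i
    unfolding ts_def by (rule someI_ex) (rule exists_root[OF axnz])
  define al where "al i = pc_line_search f x (axis i 1) (\<eta> / 2)" for i
  have alt: "\<bar>al i - ts i\<bar> \<le> \<eta> / 2" for i
    unfolding al_def by (rule ls_correct[OF axnz tsr]) (use eta in simp)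
  define G where "G = (\<Sum>i\<in>S. (g x $ i)\<^sup>2)"
  define d0 where "d0 = (\<Sum>i\<in>S. al i *\<^sub>R axis i (1::real))"
  define d where "d = (if d0 = 0 then d0 + (\<eta> / 2) *\<^sub>R axis (hd cs) 1 else d0)"
  define u where "u = (1 / norm d) *\<^sub>R d"
  define \<beta> where "\<beta> = pc_line_search f x u \<eta>"
  have step: "blockcd_step f \<eta> x cs = x + \<beta> *\<^sub>R u"
    unfolding blockcd_step_def Let_def \<beta>_def u_def d_def d0_def al_def S_def by simp
  have dnz: "d \<noteq> 0" unfolding d_def using eta by (auto simp: axis_eq_0_iff)
  have nu: "norm u = 1" unfolding u_def using dnz by simp
  have unz: "u \<noteq> 0" using nu by auto
  obtain bs where bs: "g (x + bs *\<^sub>R u) \<bullet> u = 0" using exists_root[OF unz] by blast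
  have bb: "\<bar>\<beta> - bs\<bar> \<le> \<eta>" unfolding \<beta>_def by (rule ls_correct[OF unz bs eta])
  have A: "f (x + \<beta> *\<^sub>R u) \<le> f (x + bs *\<^sub>R u) + L * \<eta>\<^sup>2"
  proof -
    have "f (x + \<beta> *\<^sub>R u) \<le> f (x + bs *\<^sub>R u) + g (x + bs *\<^sub>R u) \<bullet> ((x + \<beta> *\<^sub>R u) - (x + bs *\<^sub>R u))
        + L * (norm ((x + \<beta> *\<^sub>R u) - (x + bs *\<^sub>R u)))\<^sup>2" by (rule ub)
    moreover have "(x + \<beta> *\<^sub>R u) - (x + bs *\<^sub>R u) = (\<beta> - bs) *\<^sub>R u" by (simp add: algebra_simps)
    ultimately have "f (x + \<beta> *\<^sub>R u) \<le> f (x + bs *\<^sub>R u) + L * (\<beta> - bs)\<^sup>2"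
      using bs nu by (simp add: inner_scaleR_right)
    moreover have "L * (\<beta> - bs)\<^sup>2 \<le> L * \<eta>\<^sup>2" using bb Lpos by (intro mult_left_mono sq_le) auto
    ultimately show ?thesis by linarith
  qed
  have B: "f (x + bs *\<^sub>R u) \<le> f (x + \<tau> *\<^sub>R u)" for \<tau>
    using strict_min[OF unz bs, of \<tau>] by (cases "\<tau> = bs") auto
  have C: "f (x + \<tau> *\<^sub>R u) \<le> f x + \<tau> * (g x \<bullet> u) + L * \<tau>\<^sup>2" for \<tau>
  proof -
    have "f (x + \<tau> *\<^sub>R u) \<le> f x + g x \<bullet> ((x + \<tau> *\<^sub>R u) - x) + L * (norm ((x + \<tau> *\<^sub>R u) - x))\<^sup>2"
      by (rule ub)
    then show ?thesis using nu by (simp add: inner_scaleR_right power_mult_distrib)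
  qed
  have key: "f (blockcd_step f \<eta> x cs) \<le> f x + \<tau> * (g x \<bullet> u) + L * \<tau>\<^sup>2 + L * \<eta>\<^sup>2" for \<tau>
    using A B[of \<tau>] C[of \<tau>] unfolding step by linarith
  have G_def': "(\<Sum>i\<in>set cs. (g x $ i)\<^sup>2) = G" unfolding G_def S_def ..
  have Gnn: "G \<ge> 0" unfolding G_def by (simp add: sum_nonneg)
  have sL2: "\<sigma>\<^sup>2 \<le> L\<^sup>2" using sp sL by (intro power_mono) auto
  have "f (blockcd_step f \<eta> x cs) \<le> f x - \<sigma>\<^sup>2 / (48 * L ^ 3) * G + (L + real m * L / 48) * \<eta>\<^sup>2"
  proof (cases "G < real m * L\<^sup>2 * \<eta>\<^sup>2")
    case True
    have k0: "f (blockcd_step f \<eta> x cs) \<le> f x + L * \<eta>\<^sup>2" using key[of 0] by simp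
    have "\<sigma>\<^sup>2 / (48 * L ^ 3) * G \<le> \<sigma>\<^sup>2 / (48 * L ^ 3) * (real m * L\<^sup>2 * \<eta>\<^sup>2)"
      using True Lpos by (intro mult_left_mono) auto
    also have "\<dots> = real m * \<eta>\<^sup>2 / 48 * (\<sigma>\<^sup>2 / L)" using Lpos by (simp add: field_simps power2_eq_square power3_eq_cube)
    also have "\<dots> \<le> real m * \<eta>\<^sup>2 / 48 * L"
    proof (intro mult_left_mono)
      show "\<sigma>\<^sup>2 / L \<le> L" using sL2 Lpos by (simp add: field_simps power2_eq_square)
    qed auto
    finally have "\<sigma>\<^sup>2 / (48 * L ^ 3) * G \<le> real m * L / 48 * \<eta>\<^sup>2" by (simp add: field_simps)
    then show ?thesis using k0 by (simp add: algebra_simps)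
  next
    case False
    then have Gbig: "real m * L\<^sup>2 * \<eta>\<^sup>2 \<le> G" by simp
    have "real m * L\<^sup>2 * \<eta>\<^sup>2 > 0" using m1 Lpos eta by simp
    then have Gpos: "G > 0" using Gbig by linarith
    have each: "g x $ i * al i \<le> - 3 * (g x $ i)\<^sup>2 / (4 * L) + L * \<eta>\<^sup>2 / 4" for i
    proof -
      define gi where "gi = g x $ i"
      have c1: "gi * ts i \<le> - gi\<^sup>2 / L" unfolding gi_def by (rule coord_facts(1)[OF tsr])
      have "gi * (al i - ts i) \<le> \<bar>gi\<bar> * (\<eta> / 2)"
      proof -
        have "gi * (al i - ts i) \<le> \<bar>gi * (al i - ts i)\<bar>" by simp
        also have "\<dots> = \<bar>gi\<bar> * \<bar>al i - ts i\<bar>" by (simp add: abs_mult)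
        also have "\<dots> \<le> \<bar>gi\<bar> * (\<eta> / 2)" using alt[of i] by (intro mult_left_mono) auto
        finally show ?thesis .
      qed
      moreover have "\<bar>gi\<bar> * (\<eta> / 2) \<le> gi\<^sup>2 / (4 * L) + L * \<eta>\<^sup>2 / 4"
      proof -
        have "0 \<le> (\<bar>gi\<bar> - L * \<eta>)\<^sup>2 / (4 * L)" using Lpos by simp
        also have "\<dots> = gi\<^sup>2 / (4 * L) + L * \<eta>\<^sup>2 / 4 - \<bar>gi\<bar> * (\<eta> / 2)" using Lpos
          by (simp add: field_simps power2_eq_square)
        finally show ?thesis by simp
      qed
      moreover have "gi * al i = gi * ts i + gi * (al i - ts i)" by (simp add: algebra_simps)
      moreover have "- gi\<^sup>2 / L + gi\<^sup>2 / (4 * L) = - 3 * gi\<^sup>2 / (4 * L)" using Lpos by (simp add: field_simps)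
      ultimately show ?thesis unfolding gi_def[symmetric] using c1 by linarith
    qed
    have gd: "g x \<bullet> d0 \<le> - G / (2 * L)"
    proof -
      have "g x \<bullet> d0 = (\<Sum>i\<in>S. g x $ i * al i)" unfolding d0_def by (rule inner_sum[OF fS])
      also have "\<dots> \<le> (\<Sum>i\<in>S. - 3 * (g x $ i)\<^sup>2 / (4 * L) + L * \<eta>\<^sup>2 / 4)" by (rule sum_mono) (rule each)
      also have "\<dots> = - 3 * G / (4 * L) + real m * (L * \<eta>\<^sup>2 / 4)"
      proof -
        have e1: "(\<Sum>i\<in>S. - 3 * (g x $ i)\<^sup>2 / (4 * L)) = (- 3 / (4 * L)) * G"
          unfolding G_def sum_distrib_left by (rule sum.cong) (auto simp: field_simps)
        have e2: "(\<Sum>i\<in>S. L * \<eta>\<^sup>2 / 4) = real m * (L * \<eta>\<^sup>2 / 4)" by (simp add: cardS)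
        show ?thesis by (simp only: sum.distrib e1 e2) simp
      qed
      also have "\<dots> \<le> - 3 * G / (4 * L) + G / (4 * L)"
      proof -
        have "real m * (L * \<eta>\<^sup>2 / 4) = (real m * L\<^sup>2 * \<eta>\<^sup>2) / (4 * L)" using Lpos by (simp add: field_simps power2_eq_square)
        also have "\<dots> \<le> G / (4 * L)" using Gbig Lpos by (intro divide_right_mono) auto
        finally show ?thesis by simp
      qed
      also have "\<dots> = - G / (2 * L)" using Lpos by (simp add: field_simps)
      finally show ?thesis .
    qed
    have neg: "- G / (2 * L) < 0" using Gpos Lpos by simp
    have d0nz: "d0 \<noteq> 0" using gd neg by auto
    have dd: "d = d0" unfolding d_def using d0nz by simp
    have nd: "(norm d)\<^sup>2 \<le> 3 * G / \<sigma>\<^sup>2"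
    proof -
      have "(norm d)\<^sup>2 = (\<Sum>i\<in>S. (al i)\<^sup>2)" unfolding dd d0_def by (rule norm_sum[OF fS])
      also have "\<dots> \<le> (\<Sum>i\<in>S. 2 * ((g x $ i)\<^sup>2 / \<sigma>\<^sup>2) + \<eta>\<^sup>2 / 2)"
      proof (rule sum_mono)
        fix i assume "i \<in> S"
        have c2: "(ts i)\<^sup>2 \<le> (g x $ i)\<^sup>2 / \<sigma>\<^sup>2" by (rule coord_facts(2)[OF tsr])
        have "(al i - ts i)\<^sup>2 \<le> (\<eta> / 2)\<^sup>2" using alt[of i] by (rule sq_le)
        moreover have "(al i)\<^sup>2 \<le> 2 * (ts i)\<^sup>2 + 2 * (al i - ts i)\<^sup>2"
        proof -
          have "0 \<le> (al i - 2 * ts i)\<^sup>2" by simp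
          then show ?thesis by (simp add: power2_eq_square algebra_simps)
        qed
        ultimately show "(al i)\<^sup>2 \<le> 2 * ((g x $ i)\<^sup>2 / \<sigma>\<^sup>2) + \<eta>\<^sup>2 / 2" using c2
          by (simp add: power_divide)
      qed
      also have "\<dots> = 2 * G / \<sigma>\<^sup>2 + real m * \<eta>\<^sup>2 / 2"
      proof -
        have e1: "(\<Sum>i\<in>S. 2 * ((g x $ i)\<^sup>2 / \<sigma>\<^sup>2)) = (2 / \<sigma>\<^sup>2) * G"
          unfolding G_def sum_distrib_left by (rule sum.cong) (auto simp: field_simps)
        have e2: "(\<Sum>i\<in>S. \<eta>\<^sup>2 / 2) = real m * \<eta>\<^sup>2 / 2" by (simp add: cardS)
        show ?thesis by (simp only: sum.distrib e1 e2) simp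
      qed
      also have "\<dots> \<le> 2 * G / \<sigma>\<^sup>2 + G / (2 * \<sigma>\<^sup>2)"
      proof -
        have "real m * \<eta>\<^sup>2 \<le> G / L\<^sup>2" using Gbig Lpos by (simp add: field_simps)
        also have "\<dots> \<le> G / \<sigma>\<^sup>2" using Gnn sp sL2 Lpos by (intro divide_left_mono) auto
        finally show ?thesis by simp
      qed
      also have "\<dots> \<le> 3 * G / \<sigma>\<^sup>2" using Gnn sp by (simp add: field_simps)
      finally show ?thesis .
    qed
    define P where "P = g x \<bullet> d"
    define N where "N = (norm d)\<^sup>2"
    have Npos: "N > 0" unfolding N_def using dnz by simp
    have gu: "g x \<bullet> u = P / norm d" unfolding P_def u_def by (simp add: inner_scaleR_right)
    have gu2: "(g x \<bullet> u)\<^sup>2 = P\<^sup>2 / N" unfolding gu N_def by (simp add: power_divide)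
    have P2: "P\<^sup>2 \<ge> (G / (2 * L))\<^sup>2"
    proof -
      have "- P \<ge> G / (2 * L)" using gd unfolding P_def dd by simp
      moreover have "G / (2 * L) \<ge> 0" using Gnn Lpos by simp
      ultimately have "(G / (2 * L))\<^sup>2 \<le> (- P)\<^sup>2" by (intro power_mono) auto
      then show ?thesis by simp
    qed
    have "(g x \<bullet> u)\<^sup>2 \<ge> (G / (2 * L))\<^sup>2 / N" unfolding gu2 using P2 Npos by (intro divide_right_mono) auto
    moreover have "(G / (2 * L))\<^sup>2 / N \<ge> (G / (2 * L))\<^sup>2 / (3 * G / \<sigma>\<^sup>2)"
      using nd Npos Gpos sp unfolding N_def by (intro divide_left_mono) auto
    moreover have "(G / (2 * L))\<^sup>2 / (3 * G / \<sigma>\<^sup>2) = \<sigma>\<^sup>2 * G / (12 * L\<^sup>2)"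
      using Gpos Lpos sp by (simp add: field_simps power2_eq_square)
    ultimately have gu_lb: "(g x \<bullet> u)\<^sup>2 \<ge> \<sigma>\<^sup>2 * G / (12 * L\<^sup>2)" by linarith
    define q where "q = g x \<bullet> u"
    have kk: "f (blockcd_step f \<eta> x cs) \<le> f x + (- q / (2 * L)) * q + L * (- q / (2 * L))\<^sup>2 + L * \<eta>\<^sup>2"
      using key[of "- q / (2 * L)"] unfolding q_def .
    have qe: "(- q / (2 * L)) * q + L * (- q / (2 * L))\<^sup>2 = - q\<^sup>2 / (4 * L)"
      using Lpos by (simp add: field_simps power2_eq_square)
    have k1: "f (blockcd_step f \<eta> x cs) \<le> f x - q\<^sup>2 / (4 * L) + L * \<eta>\<^sup>2" using kk qe by linarith
    have "q\<^sup>2 / (4 * L) \<ge> (\<sigma>\<^sup>2 * G / (12 * L\<^sup>2)) / (4 * L)"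
      using gu_lb Lpos unfolding q_def by (intro divide_right_mono) auto
    moreover have "(\<sigma>\<^sup>2 * G / (12 * L\<^sup>2)) / (4 * L) = \<sigma>\<^sup>2 / (48 * L ^ 3) * G"
      using Lpos by (simp add: field_simps power2_eq_square power3_eq_cube)
    moreover have "L * \<eta>\<^sup>2 \<le> (L + real m * L / 48) * \<eta>\<^sup>2" using Lpos by (simp add: algebra_simps)
    ultimately show ?thesis using k1 by linarith
  qed
  then show ?thesis unfolding G_def' .
qed

lemma pl: "f x - f z \<le> (norm (g x))\<^sup>2 / (2 * \<sigma>)"
proof -
  define h where "h = z - x"
  have a: "f z \<ge> f x + g x \<bullet> h + \<sigma> / 2 * (norm h)\<^sup>2"
    using sc[of x z] unfolding h_def by (simp add: norm_minus_commute)
  have "0 \<le> (norm (g x + \<sigma> *\<^sub>R h))\<^sup>2" by simp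
  also have "\<dots> = (norm (g x))\<^sup>2 + 2 * \<sigma> * (g x \<bullet> h) + \<sigma>\<^sup>2 * (norm h)\<^sup>2"
    unfolding power2_norm_eq_inner by (simp add: inner_add_left inner_add_right inner_commute power2_eq_square algebra_simps)
  finally have "- (norm (g x))\<^sup>2 / (2 * \<sigma>) \<le> g x \<bullet> h + \<sigma> / 2 * (norm h)\<^sup>2"
    using sp by (simp add: field_simps power2_eq_square)
  then show ?thesis using a by linarith
qed

lemma norm_sq_sum: "(norm (v :: real^'n))\<^sup>2 = (\<Sum>i\<in>UNIV. (v $ i)\<^sup>2)"
  unfolding power2_norm_eq_inner by (simp add: inner_vec_def power2_eq_square)

lemma exp_step:
  assumes m1: "1 \<le> m" and mn: "m \<le> CARD('n)" and eta: "\<eta> > 0"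
  shows "measure_pmf.expectation (pmf_of_set (coord_choices m)) (\<lambda>cs. f (blockcd_step f \<eta> x cs) - f z)
     \<le> (f x - f z) - \<sigma> ^ 3 * real m / (24 * L ^ 3 * real CARD('n)) * (f x - f z) + (L + real m * L / 48) * \<eta>\<^sup>2"
proof -
  let ?C = "coord_choices m :: 'n list set"
  have fC: "finite ?C" by (rule coord_choices_finite)
  have neC: "?C \<noteq> {}" by (rule coord_choices_ne[OF mn])
  have cpos: "card ?C > 0" using fC neC by (simp add: card_gt_0_iff)
  define a where "a = \<sigma>\<^sup>2 / (48 * L ^ 3)"
  define B where "B = (L + real m * L / 48) * \<eta>\<^sup>2"
  define D where "D = f x - f z"
  have apos: "a > 0" unfolding a_def using sp Lpos by simp
  have "measure_pmf.expectation (pmf_of_set ?C) (\<lambda>cs. f (blockcd_step f \<eta> x cs) - f z)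
      = (\<Sum>cs\<in>?C. f (blockcd_step f \<eta> x cs) - f z) / real (card ?C)"
    by (rule integral_pmf_of_set[OF neC fC])
  also have "(\<Sum>cs\<in>?C. f (blockcd_step f \<eta> x cs) - f z) \<le> (\<Sum>cs\<in>?C. D + B - a * (\<Sum>i\<in>set cs. (g x $ i)\<^sup>2))"
  proof (rule sum_mono)
    fix cs assume "cs \<in> ?C"
    from step_decrease[OF this m1 eta, of x] show "f (blockcd_step f \<eta> x cs) - f z \<le> D + B - a * (\<Sum>i\<in>set cs. (g x $ i)\<^sup>2)"
      unfolding a_def B_def D_def by linarith
  qed
  also have "(\<Sum>cs\<in>?C. D + B - a * (\<Sum>i\<in>set cs. (g x $ i)\<^sup>2))
      = real (card ?C) * (D + B) - a * (real (card ?C) * real m / real CARD('n) * (norm (g x))\<^sup>2)"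
    by (simp add: sum_subtractf sum_distrib_left[symmetric] avg_sum[OF mn] norm_sq_sum)
  finally have E0: "measure_pmf.expectation (pmf_of_set ?C) (\<lambda>cs. f (blockcd_step f \<eta> x cs) - f z)
      \<le> (real (card ?C) * (D + B) - a * (real (card ?C) * real m / real CARD('n) * (norm (g x))\<^sup>2)) / real (card ?C)"
    using cpos by (simp add: divide_right_mono)
  have "(real (card ?C) * (D + B) - a * (real (card ?C) * real m / real CARD('n) * (norm (g x))\<^sup>2)) / real (card ?C)
     = D + B - a * (real m / real CARD('n) * (norm (g x))\<^sup>2)" using cpos by (simp add: field_simps)
  with E0 have E: "measure_pmf.expectation (pmf_of_set ?C) (\<lambda>cs. f (blockcd_step f \<eta> x cs) - f z)
      \<le> D + B - a * (real m / real CARD('n) * (norm (g x))\<^sup>2)" by simp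
  have "2 * \<sigma> * D \<le> (norm (g x))\<^sup>2" using pl[of x z] sp unfolding D_def by (simp add: field_simps)
  then have "a * (real m / real CARD('n) * (2 * \<sigma> * D)) \<le> a * (real m / real CARD('n) * (norm (g x))\<^sup>2)"
    using apos by (intro mult_left_mono) auto
  moreover have "a * (real m / real CARD('n) * (2 * \<sigma> * D)) = \<sigma> ^ 3 * real m / (24 * L ^ 3 * real CARD('n)) * D"
    unfolding a_def using Lpos by (simp add: field_simps power2_eq_square power3_eq_cube)
  ultimately show ?thesis using E unfolding D_def B_def by linarith
qed

lemma dist_finite:
  assumes mn: "m \<le> CARD('n)"
  shows "finite (set_pmf (blockcd_dist f \<eta> m x0 t))"
proof (induction t)
  case 0 then show ?case by simp
next
  case (Suc t)
  have fC: "finite (coord_choices m :: 'n list set)" by (rule coord_choices_finite)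
  have neC: "coord_choices m \<noteq> ({} :: 'n list set)" by (rule coord_choices_ne[OF mn])
  show ?case using Suc fC neC by simp
qed

lemma dist_rec:
  assumes m1: "1 \<le> m" and mn: "m \<le> CARD('n)" and eta: "\<eta> > 0"
    and zmin: "\<forall>y. f z \<le> f y"
    and c0: "0 \<le> c" and cle: "c \<le> \<sigma> ^ 3 * real m / (24 * L ^ 3 * real CARD('n))"
  shows "measure_pmf.expectation (blockcd_dist f \<eta> m x0 (Suc t)) (\<lambda>x. f x - f z)
     \<le> (1 - c) * measure_pmf.expectation (blockcd_dist f \<eta> m x0 t) (\<lambda>x. f x - f z) + (L + real m * L / 48) * \<eta>\<^sup>2"
proof -
  let ?p = "blockcd_dist f \<eta> m x0 t"
  let ?C = "coord_choices m :: 'n list set"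
  define A where "A = set_pmf ?p"
  define B where "B = (L + real m * L / 48) * \<eta>\<^sup>2"
  have fA: "finite A" unfolding A_def by (rule dist_finite[OF mn])
  have fC: "finite ?C" by (rule coord_choices_finite)
  have neC: "?C \<noteq> {}" by (rule coord_choices_ne[OF mn])
  have per: "measure_pmf.expectation (map_pmf (blockcd_step f \<eta> a) (pmf_of_set ?C)) (\<lambda>x. f x - f z)
      \<le> (1 - c) * (f a - f z) + B" for a
  proof -
    have "measure_pmf.expectation (map_pmf (blockcd_step f \<eta> a) (pmf_of_set ?C)) (\<lambda>x. f x - f z)
       = measure_pmf.expectation (pmf_of_set ?C) (\<lambda>cs. f (blockcd_step f \<eta> a cs) - f z)" by simp
    also have "\<dots> \<le> (f a - f z) - \<sigma> ^ 3 * real m / (24 * L ^ 3 * real CARD('n)) * (f a - f z) + B"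
      unfolding B_def by (rule exp_step[OF m1 mn eta])
    also have "\<dots> \<le> (1 - c) * (f a - f z) + B"
    proof -
      have "c * (f a - f z) \<le> \<sigma> ^ 3 * real m / (24 * L ^ 3 * real CARD('n)) * (f a - f z)"
        using cle zmin by (intro mult_right_mono) auto
      then show ?thesis by (simp add: algebra_simps)
    qed
    finally show ?thesis .
  qed
  have "measure_pmf.expectation (blockcd_dist f \<eta> m x0 (Suc t)) (\<lambda>x. f x - f z)
      = (\<Sum>a\<in>A. pmf ?p a *\<^sub>R measure_pmf.expectation (map_pmf (blockcd_step f \<eta> a) (pmf_of_set ?C)) (\<lambda>x. f x - f z))"
    unfolding blockcd_dist.simps
    by (rule pmf_expectation_bind[OF fA]) (use fC neC in \<open>simp_all add: A_def\<close>)
  also have "\<dots> \<le> (\<Sum>a\<in>A. pmf ?p a * ((1 - c) * (f a - f z) + B))"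
  proof (rule sum_mono)
    fix a assume "a \<in> A"
    show "pmf ?p a *\<^sub>R measure_pmf.expectation (map_pmf (blockcd_step f \<eta> a) (pmf_of_set ?C)) (\<lambda>x. f x - f z)
        \<le> pmf ?p a * ((1 - c) * (f a - f z) + B)"
      using mult_left_mono[OF per[of a] pmf_nonneg[of ?p a]] by (simp only: real_scaleR_def)
  qed
  also have "\<dots> = (1 - c) * (\<Sum>a\<in>A. (f a - f z) * pmf ?p a) + B * (\<Sum>a\<in>A. pmf ?p a)"
  proof -
    have "(\<Sum>a\<in>A. pmf ?p a * ((1 - c) * (f a - f z) + B)) = (\<Sum>a\<in>A. (1 - c) * ((f a - f z) * pmf ?p a) + B * pmf ?p a)"
      by (rule sum.cong) (simp_all add: algebra_simps)
    also have "\<dots> = (1 - c) * (\<Sum>a\<in>A. (f a - f z) * pmf ?p a) + B * (\<Sum>a\<in>A. pmf ?p a)"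
      by (simp only: sum.distrib sum_distrib_left)
    finally show ?thesis .
  qed
  also have "(\<Sum>a\<in>A. pmf ?p a) = 1" by (rule sum_pmf_eq_1[OF fA]) (simp add: A_def)
  also have "(\<Sum>a\<in>A. (f a - f z) * pmf ?p a) = measure_pmf.expectation ?p (\<lambda>x. f x - f z)"
    by (rule integral_measure_pmf_real[symmetric]) (use fA in \<open>auto simp: A_def\<close>)
  finally show ?thesis unfolding B_def by simp
qed

end

theorem theorem1:
  fixes f :: "real^'n \<Rightarrow> real" and x0 xstar :: "real^'n"
    and m :: nat and \<eta> \<sigma> L :: real and T :: nat
  assumes "1 \<le> m" "m \<le> CARD('n)" "\<eta> > 0" "0 < \<sigma>" "\<sigma> \<le> L"
    and "strongly_convex_smooth \<sigma> L f"
    and "\<forall>y. f xstar \<le> f y"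
  defines "\<gamma> \<equiv> (\<sigma> / L) / 53 *
             ((1 - sqrt (1 - \<sigma> / L)) / (1 + sqrt (1 - \<sigma> / L)))\<^sup>2"
  defines "\<epsilon> \<equiv> 8 * real CARD('n) * L\<^sup>2 / \<sigma> * (1 + real CARD('n) / (real m * \<gamma>)) * \<eta>\<^sup>2"
  defines "T0 \<equiv> \<lceil>real CARD('n) / (real m * \<gamma>) *
             ln ((f x0 - f xstar) * (1 + real CARD('n) / (real m * \<gamma>)) / \<epsilon>)\<rceil>"
  assumes "of_int T0 \<le> real T"
  shows "measure_pmf.expectation (blockcd_dist f \<eta> m x0 T) (\<lambda>x. f x - f xstar) \<le> \<epsilon>"
proof -
  note m1 = assms(1) and mn = assms(2) and eta = assms(3) and sp = assms(4) and sL = assms(5)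
  note zmin = assms(7) and TT = assms(11)
  obtain g :: "real^'n \<Rightarrow> real^'n" where
    g1: "\<forall>x y. f y \<ge> f x + g x \<bullet> (y - x) + \<sigma> / 2 * (norm (x - y))\<^sup>2" and
    g2: "\<forall>x y. norm (g x - g y) \<le> L * norm (x - y)"
    using assms(6) unfolding strongly_convex_smooth_def by blast
  interpret scs f g \<sigma> L by unfold_locales (use g1 g2 sp sL in auto)
  define n where "n = real CARD('n)"
  have n1: "n \<ge> 1" unfolding n_def by simp
  have mpos: "real m > 0" using m1 by simp
  have mn': "real m \<le> n" unfolding n_def using mn by simp
  define \<kappa> where "\<kappa> = \<sigma> / L"
  have k0: "0 < \<kappa>" "\<kappa> \<le> 1" unfolding \<kappa>_def using sp sL Lpos by auto
  define s where "s = sqrt (1 - \<kappa>)"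
  have s0: "0 \<le> s" "s < 1" unfolding s_def using k0 by auto
  have s1: "1 - \<kappa> \<le> s"
  proof -
    have "(1 - \<kappa>) * (1 - \<kappa>) \<le> 1 * (1 - \<kappa>)" using k0 by (intro mult_right_mono) auto
    then have "(1 - \<kappa>)\<^sup>2 \<le> 1 - \<kappa>" by (simp add: power2_eq_square)
    then have "sqrt ((1 - \<kappa>)\<^sup>2) \<le> sqrt (1 - \<kappa>)" by (rule real_sqrt_le_mono)
    then show ?thesis unfolding s_def using k0 by simp
  qed
  define r where "r = (1 - s) / (1 + s)"
  have r0: "0 < r" unfolding r_def using s0 by simp
  have r1: "r \<le> \<kappa>"
  proof -
    have "(1 - s) / (1 + s) \<le> (1 - s) / 1" using s0 by (intro divide_left_mono) auto
    then have "r \<le> 1 - s" unfolding r_def by simp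
    then show ?thesis using s1 by linarith
  qed
  have g_eq: "\<gamma> = \<kappa> / 53 * r\<^sup>2" unfolding \<gamma>_def \<kappa>_def r_def s_def ..
  have gpos: "\<gamma> > 0" unfolding g_eq using k0 r0 by simp
  have gle: "\<gamma> \<le> \<kappa> ^ 3 / 53"
  proof -
    have "r\<^sup>2 \<le> \<kappa>\<^sup>2" using r0 r1 by (intro power_mono) auto
    then have "\<kappa> / 53 * r\<^sup>2 \<le> \<kappa> / 53 * \<kappa>\<^sup>2" using k0 by (intro mult_left_mono) auto
    then show ?thesis unfolding g_eq by (simp add: power2_eq_square power3_eq_cube)
  qed
  have gle1: "\<gamma> \<le> 1 / 53"
  proof -
    have "\<kappa> ^ 3 \<le> 1" using k0 by (simp add: power_le_one)
    then show ?thesis using gle by linarith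
  qed
  define c where "c = real m * \<gamma> / n"
  have cpos: "c > 0" unfolding c_def using mpos gpos n1 by simp
  have cle_g: "c \<le> \<gamma>" unfolding c_def using mn' gpos n1 by (simp add: field_simps)
  have c1: "c \<le> 1" using cle_g gle1 by linarith
  have cinv: "real CARD('n) / (real m * \<gamma>) = 1 / c" unfolding c_def n_def by simp
  have cle: "c \<le> \<sigma> ^ 3 * real m / (24 * L ^ 3 * real CARD('n))"
  proof -
    have "\<gamma> \<le> \<sigma> ^ 3 / (24 * L ^ 3)"
    proof -
      have "\<kappa> ^ 3 / 53 \<le> \<kappa> ^ 3 / 24" using k0 by (simp add: divide_left_mono)
      also have "\<kappa> ^ 3 / 24 = \<sigma> ^ 3 / (24 * L ^ 3)" unfolding \<kappa>_def by (simp add: power_divide)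
      finally show ?thesis using gle by linarith
    qed
    then have "real m * \<gamma> / n \<le> real m * (\<sigma> ^ 3 / (24 * L ^ 3)) / n"
      using mpos n1 by (intro divide_right_mono mult_left_mono) auto
    then show ?thesis unfolding c_def n_def by (simp add: mult.commute)
  qed
  define B where "B = (L + real m * L / 48) * \<eta>\<^sup>2"
  define E where "E t = measure_pmf.expectation (blockcd_dist f \<eta> m x0 t) (\<lambda>x. f x - f xstar)" for t
  define D0 where "D0 = f x0 - f xstar"
  have D0nn: "D0 \<ge> 0" unfolding D0_def using zmin by simp
  have rec: "E (Suc t) \<le> (1 - c) * E t + B" for t
    unfolding E_def B_def using dist_rec[OF m1 mn eta zmin _ cle] cpos by simp
  have closed: "E t \<le> (1 - c) ^ t * D0 + B / c" for t
  proof (induction t)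
    case 0
    have "B / c \<ge> 0" unfolding B_def using cpos Lpos by simp
    then show ?case unfolding E_def D0_def by simp
  next
    case (Suc t)
    have "E (Suc t) \<le> (1 - c) * E t + B" by (rule rec)
    also have "\<dots> \<le> (1 - c) * ((1 - c) ^ t * D0 + B / c) + B"
      using Suc c1 by (intro add_right_mono mult_left_mono) auto
    also have "\<dots> = (1 - c) ^ Suc t * D0 + B / c" using cpos by (simp add: field_simps)
    finally show ?case .
  qed
  define K where "K = 8 * real CARD('n) * L\<^sup>2 / \<sigma>"
  have eps_eq: "\<epsilon> = K * \<eta>\<^sup>2 + K * \<eta>\<^sup>2 / c" unfolding \<epsilon>_def K_def cinv using cpos sp by (simp add: field_simps)
  have BK: "B \<le> K * \<eta>\<^sup>2"
  proof -
    have "L \<le> L\<^sup>2 / \<sigma>" using sp sL Lpos by (simp add: field_simps power2_eq_square mult_right_mono)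
    then have "8 * n * L \<le> 8 * n * (L\<^sup>2 / \<sigma>)" using n1 by (intro mult_left_mono) auto
    moreover have "L + real m * L / 48 \<le> 8 * n * L"
    proof -
      have "real m + 48 \<le> n * 384" using mn' n1 by linarith
      then have "L * (real m + 48) \<le> L * (n * 384)" using Lpos by (intro mult_left_mono) auto
      then show ?thesis by (simp add: field_simps)
    qed
    ultimately have "L + real m * L / 48 \<le> K" unfolding K_def n_def by simp
    then show ?thesis unfolding B_def using eta by (intro mult_right_mono) auto
  qed
  have Kpos: "K > 0" unfolding K_def using sp Lpos by simp
  have epspos: "\<epsilon> > 0"
  proof -
    have "K * \<eta>\<^sup>2 > 0" using Kpos eta by simp
    moreover have "K * \<eta>\<^sup>2 / c > 0" using Kpos eta cpos by simp
    ultimately show ?thesis unfolding eps_eq by linarith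
  qed
  have part1: "(1 - c) ^ T * D0 \<le> K * \<eta>\<^sup>2"
  proof (cases "D0 = 0")
    case True then show ?thesis using Kpos by simp
  next
    case False
    then have D0p: "D0 > 0" using D0nn by simp
    define Q where "Q = 1 + 1 / c"
    have "1 / c > 0" using cpos by simp
    then have Qpos: "Q > 0" unfolding Q_def by linarith
    have "\<epsilon> = K * \<eta>\<^sup>2 * Q" unfolding eps_eq Q_def by (simp add: distrib_left)
    then have eQ: "\<epsilon> / Q = K * \<eta>\<^sup>2" using Qpos by simp
    have argpos: "D0 * Q / \<epsilon> > 0" using D0p Qpos epspos by simp
    have "T0 = \<lceil>1 / c * ln (D0 * Q / \<epsilon>)\<rceil>" unfolding T0_def cinv D0_def Q_def ..
    then have "1 / c * ln (D0 * Q / \<epsilon>) \<le> real T" using TT by linarith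
    then have cT: "ln (D0 * Q / \<epsilon>) \<le> c * real T" using cpos by (simp add: field_simps)
    have "(1 - c) ^ T \<le> exp (- c) ^ T"
      using c1 exp_ge_add_one_self[of "- c"] by (intro power_mono) auto
    also have "\<dots> = exp (- (c * real T))" by (simp add: exp_of_nat_mult[symmetric] mult.commute)
    also have "\<dots> \<le> exp (- ln (D0 * Q / \<epsilon>))" using cT by simp
    also have "\<dots> = \<epsilon> / (D0 * Q)" using argpos by (simp add: exp_minus)
    finally have "(1 - c) ^ T * D0 \<le> \<epsilon> / (D0 * Q) * D0" using D0p by (intro mult_right_mono) auto
    also have "\<dots> = \<epsilon> / Q" using D0p by simp
    finally show ?thesis using eQ by simp
  qed
  have part2: "B / c \<le> K * \<eta>\<^sup>2 / c" using BK cpos by (intro divide_right_mono) auto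
  have "E T \<le> \<epsilon>" using closed[of T] part1 part2 unfolding eps_eq by linarith
  then show ?thesis unfolding E_def .
qed

end
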